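(* Let $G$ be a finitely generated sofic group, $(\mathcal X,d)$ a compact metric space and $\mu\in\mathrm{Prob}(\mathcal X^G,G)$ a periodic measure. (i) There is a sofic model $(V_n,\sigma_n,\mu_n)$ for $(G,\mathcal X,\mu)$ such that $(\Pi_v^{\sigma_n})_*\mu_n=\mu$ for all $n$ and all $v\in V_n$. (ii) If $G$ is residually finite, the sofic model in (i) can be chosen to be a residually finite model.
   Context: $G$ acts on $\mathcal X^G$ (product topology) by $(h.\omega)(g)=\omega(gh)$; $\mathrm{Prob}(\mathcal X^G,G)$ is the set of $G$-invariant Borel probability measures; $\mu$ is periodic if it is invariant with finite support. A sofic approximation is $(V_n,\sigma_n)$, $V_n$ finite, $\sigma_n:G\to\mathrm{Sym}(V_n)$, $g\mapsto\sigma_n^g$, with $|\{v:\sigma_n^g\sigma_n^h(v)=\sigma_n^{gh}(v)\}|/|V_n|\to1$ for all $g,h$ and $|\{v:\sigma_n^g(v)\ne v\}|/|V_n|\to1$ for $g\ne e$. $\Pi_v^{\sigma_n}(\rho)=(\rho(\sigma_n^g(v)))_{g\in G}$ for $\rho\in\mathcal X^{V_n}$. A sofic model is $(V_n,\sigma_n,\mu_n)$ with $(V_n,\sigma_n)$ a sofic approximation and $\mu_n\in\mathrm{Prob}(\mathcal X^{V_n})$ such that $|\{v:(\Pi_v^{\sigma_n})_*\mu_n\in\mathcal O\}|/|V_n|\to1$ for every weak* neighbourhood $\mathcal O$ of $\mu$. A residually finite approximation: finite-index normal $\Gamma_n$ with $\Gamma_{n+1}\le\Gamma_n$, $\bigcap\Gamma_n=\{e\}$,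 $V_n=G/\Gamma_n$, $\sigma_n^g(v\Gamma_n)=gv\Gamma_n$. A residually finite model is a sofic model whose approximation is residually finite and whose $\mu_n$ are invariant under the action of the finite group $V_n$ on $\mathcal X^{V_n}$ by $(w.\rho)(v)=\rho(vw)$. *)

theory Defs
  imports "HOL-Probability.Probability" "HOL-Algebra.Generated_Groups" "HOL-Algebra.Left_Coset"
begin

text \<open>Groups are HOL-Algebra groups whose carrier is the whole type 'g.
  The shift space X^G is the function type 'g => 'x with the product topology
  (instance from Function_Topology), carrying its Borel sigma-algebra.\<close>

definition finitely_generated :: "('g, 'b) monoid_scheme \<Rightarrow> bool" where
  "finitely_generated G \<longleftrightarrow>
     (\<exists>S. finite S \<and> S \<subseteq> carrier G \<and> generate G S = carrier G)"

definition shift :: "('g, 'b) monoid_scheme \<Rightarrow> 'g \<Rightarrow> ('g \<Rightarrow> 'x) \<Rightarrow> ('g \<Rightarrow> 'x)" where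
  "shift G h \<omega> = (\<lambda>g. \<omega> (g \<otimes>\<^bsub>G\<^esub> h))"

definition invariant_prob ::
  "('g, 'b) monoid_scheme \<Rightarrow> ('g \<Rightarrow> 'x::topological_space) measure \<Rightarrow> bool" where
  "invariant_prob G \<mu> \<longleftrightarrow>
     prob_space \<mu> \<and> sets \<mu> = sets borel \<and>
     (\<forall>h\<in>carrier G. distr \<mu> borel (shift G h) = \<mu>)"

definition measure_support :: "('a::topological_space) measure \<Rightarrow> 'a set" where
  "measure_support \<mu> = {x. \<forall>U. open U \<longrightarrow> x \<in> U \<longrightarrow> emeasure \<mu> U > 0}"

definition periodic_measure ::
  "('g, 'b) monoid_scheme \<Rightarrow> ('g \<Rightarrow> 'x::topological_space) measure \<Rightarrow> bool" where
  "periodic_measure G \<mu> \<longleftrightarrow> invariant_prob G \<mu> \<and> finite (measure_support \<mu>)"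

definition sofic_approx ::
  "('g, 'b) monoid_scheme \<Rightarrow> (nat \<Rightarrow> 'v set) \<Rightarrow> (nat \<Rightarrow> 'g \<Rightarrow> 'v \<Rightarrow> 'v) \<Rightarrow> bool" where
  "sofic_approx G V \<sigma> \<longleftrightarrow>
     (\<forall>n. finite (V n)) \<and>
     (\<forall>n. \<forall>g\<in>carrier G. bij_betw (\<sigma> n g) (V n) (V n)) \<and>
     (\<forall>g\<in>carrier G. \<forall>h\<in>carrier G.
        (\<lambda>n. real (card {v\<in>V n. \<sigma> n g (\<sigma> n h v) = \<sigma> n (g \<otimes>\<^bsub>G\<^esub> h) v})
              / real (card (V n))) \<longlonglongrightarrow> 1) \<and>
     (\<forall>g\<in>carrier G. g \<noteq> \<one>\<^bsub>G\<^esub> \<longrightarrow>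
        (\<lambda>n. real (card {v\<in>V n. \<sigma> n g v \<noteq> v}) / real (card (V n))) \<longlonglongrightarrow> 1)"

definition sofic_group :: "('g, 'b) monoid_scheme \<Rightarrow> bool" where
  "sofic_group G \<longleftrightarrow> (\<exists>(V :: nat \<Rightarrow> nat set) \<sigma>. sofic_approx G V \<sigma>)"

definition Pi_v :: "(nat \<Rightarrow> 'g \<Rightarrow> 'v \<Rightarrow> 'v) \<Rightarrow> nat \<Rightarrow> 'v \<Rightarrow> ('v \<Rightarrow> 'x) \<Rightarrow> ('g \<Rightarrow> 'x)" where
  "Pi_v \<sigma> n v \<rho> = (\<lambda>g. \<rho> (\<sigma> n g v))"

definition weak_star_nhd :: "('a::topological_space) measure \<Rightarrow> 'a measure set \<Rightarrow> bool" where
  "weak_star_nhd \<mu> U \<longleftrightarrow>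
     (\<exists>(F :: ('a \<Rightarrow> real) set) e. finite F \<and> e > 0 \<and> (\<forall>f\<in>F. continuous_on UNIV f) \<and>
        {\<nu>. prob_space \<nu> \<and> sets \<nu> = sets borel \<and>
             (\<forall>f\<in>F. \<bar>(\<integral>x. f x \<partial>\<nu>) - (\<integral>x. f x \<partial>\<mu>)\<bar> < e)} \<subseteq> U)"

text \<open>Measures on X^{V_n}: probability measures on the product space
  PiM (V n) (%_. borel) (extensional functions on V n).\<close>
definition sofic_model ::
  "('g, 'b) monoid_scheme \<Rightarrow> ('g \<Rightarrow> 'x::topological_space) measure \<Rightarrow>
   (nat \<Rightarrow> 'v set) \<Rightarrow> (nat \<Rightarrow> 'g \<Rightarrow> 'v \<Rightarrow> 'v) \<Rightarrow> (nat \<Rightarrow> ('v \<Rightarrow> 'x) measure) \<Rightarrow> bool" where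
  "sofic_model G \<mu> V \<sigma> \<mu>s \<longleftrightarrow>
     sofic_approx G V \<sigma> \<and>
     (\<forall>n. prob_space (\<mu>s n) \<and> sets (\<mu>s n) = sets (PiM (V n) (\<lambda>_. borel))) \<and>
     (\<forall>U. weak_star_nhd \<mu> U \<longrightarrow>
        (\<lambda>n. real (card {v\<in>V n. distr (\<mu>s n) borel (Pi_v \<sigma> n v) \<in> U})
              / real (card (V n))) \<longlonglongrightarrow> 1)"

definition residually_finite :: "('g, 'b) monoid_scheme \<Rightarrow> bool" where
  "residually_finite G \<longleftrightarrow>
     (\<forall>g\<in>carrier G. g \<noteq> \<one>\<^bsub>G\<^esub> \<longrightarrow>
        (\<exists>N. N \<lhd> G \<and> finite (rcosets\<^bsub>G\<^esub> N) \<and> g \<notin> N))"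

definition rf_chain :: "('g, 'b) monoid_scheme \<Rightarrow> (nat \<Rightarrow> 'g set) \<Rightarrow> bool" where
  "rf_chain G \<Gamma> \<longleftrightarrow>
     (\<forall>n. \<Gamma> n \<lhd> G \<and> finite (lcosets\<^bsub>G\<^esub> (\<Gamma> n))) \<and>
     (\<forall>n. \<Gamma> (Suc n) \<subseteq> \<Gamma> n) \<and>
     (\<Inter>n. \<Gamma> n) = {\<one>\<^bsub>G\<^esub>}"

definition rf_V :: "('g, 'b) monoid_scheme \<Rightarrow> (nat \<Rightarrow> 'g set) \<Rightarrow> nat \<Rightarrow> 'g set set" where
  "rf_V G \<Gamma> n = lcosets\<^bsub>G\<^esub> (\<Gamma> n)"

definition rf_\<sigma> :: "('g, 'b) monoid_scheme \<Rightarrow> nat \<Rightarrow> 'g \<Rightarrow> 'g set \<Rightarrow> 'g set" where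
  "rf_\<sigma> G n g C = g <#\<^bsub>G\<^esub> C"

definition rf_model ::
  "('g, 'b) monoid_scheme \<Rightarrow> ('g \<Rightarrow> 'x::topological_space) measure \<Rightarrow>
   (nat \<Rightarrow> 'g set) \<Rightarrow> (nat \<Rightarrow> ('g set \<Rightarrow> 'x) measure) \<Rightarrow> bool" where
  "rf_model G \<mu> \<Gamma> \<mu>s \<longleftrightarrow>
     rf_chain G \<Gamma> \<and>
     sofic_model G \<mu> (rf_V G \<Gamma>) (rf_\<sigma> G) \<mu>s \<and>
     (\<forall>n. \<forall>w\<in>rf_V G \<Gamma> n.
        distr (\<mu>s n) (PiM (rf_V G \<Gamma> n) (\<lambda>_. borel))
          (\<lambda>\<rho>. \<lambda>v\<in>rf_V G \<Gamma> n. \<rho> (v <#>\<^bsub>G\<^esub> w)) = \<mu>s n)"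

end

theory Submission
  imports Defs
begin


lemma compact_countable_dense:
  assumes "compact (UNIV :: 'x::metric_space set)"
  obtains D :: "'x::metric_space set" where "countable D" "\<And>x e. e > 0 \<Longrightarrow> \<exists>q\<in>D. dist q x < e"
proof -
  have "\<exists>T. finite T \<and> (UNIV::'x set) \<subseteq> (\<Union>c\<in>T. ball c (1 / Suc k))" for k :: nat
  proof -
    have "(UNIV::'x set) \<subseteq> (\<Union>c\<in>UNIV. ball c (1 / Suc k))" by auto
    then obtain C' where "C' \<subseteq> UNIV" "finite C'" "(UNIV::'x set) \<subseteq> (\<Union>c\<in>C'. ball c (1 / Suc k))"
      using compactE_image[OF assms, of UNIV "\<lambda>c. ball c (1 / Suc k)"] by auto
    then show ?thesis by blast
  qed
  then obtain T where T: "\<And>k. finite (T k)" "\<And>k. (UNIV::'x set) \<subseteq> (\<Union>c\<in>T k. ball c (1 / Suc k))"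
    by metis
  show ?thesis
  proof (rule that[of "\<Union>k. T k"])
    show "countable (\<Union>k. T k)" using T(1) by (simp add: countable_finite)
    fix x :: 'x and e :: real assume "e > 0"
    then obtain k where k: "1 / real (Suc k) < e" using reals_Archimedean[of e]
      by (metis inverse_eq_divide)
    from T(2)[of k] obtain c where "c \<in> T k" "x \<in> ball c (1 / Suc k)" by blast
    then show "\<exists>q\<in>\<Union>k. T k. dist q x < e" using k by (auto intro!: bexI[of _ c])
  qed
qed

lemma Pi_measurable:
  fixes s :: "'g \<Rightarrow> 'v"
  assumes V: "finite V" and s: "\<And>g. s g \<in> V" and X: "compact (UNIV :: 'x::metric_space set)"
  shows "(\<lambda>\<rho>. \<lambda>g. \<rho> (s g)) \<in> measurable (PiM V (\<lambda>_. (borel :: 'x measure))) (borel :: ('g \<Rightarrow> 'x) measure)"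
proof (rule borel_measurableI)
  obtain D :: "'x set" where D: "countable D" "\<And>x e. e > 0 \<Longrightarrow> \<exists>q\<in>D. dist q x < e"
    using compact_countable_dense[OF X] by blast
  fix U :: "('g \<Rightarrow> 'x) set" assume U: "open U"
  define F where "F = (\<lambda>\<rho>::'v\<Rightarrow>'x. \<lambda>g. \<rho> (s g))"
  define SP where "SP = space (PiM V (\<lambda>_. (borel :: 'x measure)))"
  have SP: "SP = PiE V (\<lambda>_. UNIV)" unfolding SP_def by (simp add: space_PiM)
  define W where "W = F -` U \<inter> SP"
  define B where "B = (\<lambda>(q::'v\<Rightarrow>'x, k::nat). PiE V (\<lambda>u. ball (q u) (1 / Suc k)))"
  define I where "I = {(q,k). q \<in> PiE V (\<lambda>_. D) \<and> B (q,k) \<subseteq> W}"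
  have key: "\<exists>e>0. \<forall>\<rho>'\<in>SP. (\<forall>u\<in>V. dist (\<rho>' u) (\<rho> u) < e) \<longrightarrow> \<rho>' \<in> W" if "\<rho> \<in> W" for \<rho>
  proof -
    have "F \<rho> \<in> U" using that W_def by auto
    have oU: "openin (product_topology (\<lambda>i. euclidean) UNIV) U" using U by (simp only: open_fun_def)
    have "\<exists>U'. finite {i \<in> UNIV. U' i \<noteq> topspace euclidean} \<and>
      (\<forall>i\<in>UNIV. openin euclidean (U' i)) \<and> F \<rho> \<in> PiE UNIV U' \<and> PiE UNIV U' \<subseteq> U"
      using iffD1[OF openin_product_topology_alt oU] \<open>F \<rho> \<in> U\<close> by (rule bspec)
    then obtain U' where U': "finite {i \<in> UNIV. U' i \<noteq> topspace euclidean}"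
      "\<forall>i\<in>UNIV. openin euclidean (U' i)" "F \<rho> \<in> PiE UNIV U'" "PiE UNIV U' \<subseteq> U"
      by blast
    define J where "J = {i. U' i \<noteq> UNIV}"
    have J: "finite J" using U'(1) unfolding J_def by simp
    have "\<forall>i\<in>J. \<exists>e>0. ball (\<rho> (s i)) e \<subseteq> U' i"
    proof
      fix i assume "i \<in> J"
      have "open (U' i)" using U'(2) by auto
      moreover have "\<rho> (s i) \<in> U' i" using U'(3) unfolding F_def by auto
      ultimately show "\<exists>e>0. ball (\<rho> (s i)) e \<subseteq> U' i" using open_contains_ball by blast
    qed
    then obtain ee where ee: "\<And>i. i \<in> J \<Longrightarrow> ee i > 0 \<and> ball (\<rho> (s i)) (ee i) \<subseteq> U' i" by metis
    define e where "e = Min (insert 1 (ee ` J))"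
    have epos: "e > 0" unfolding e_def using J ee by (subst Min_gr_iff) auto
    have ele: "e \<le> ee i" if "i \<in> J" for i unfolding e_def using J that by (intro Min_le) auto
    show ?thesis
    proof (intro exI[of _ e] conjI epos ballI impI)
      fix \<rho>' assume r: "\<rho>' \<in> SP" "\<forall>u\<in>V. dist (\<rho>' u) (\<rho> u) < e"
      have "F \<rho>' \<in> PiE UNIV U'"
      proof -
        have "F \<rho>' i \<in> U' i" for i
        proof (cases "i \<in> J")
          case True
          have "dist (\<rho> (s i)) (\<rho>' (s i)) < ee i" using r(2) s[of i] ele[OF True]
            by (metis dist_commute order_less_le_trans)
          then show ?thesis using ee[OF True] unfolding F_def by auto
        next
          case False then show ?thesis unfolding J_def by auto
        qed
        then show ?thesis by auto
      qed
      then show "\<rho>' \<in> W" using U'(4) r(1) unfolding W_def by auto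
    qed
  qed
  have "W = (\<Union>x\<in>I. B x)"
  proof
    show "(\<Union>x\<in>I. B x) \<subseteq> W" unfolding I_def by auto
    show "W \<subseteq> (\<Union>x\<in>I. B x)"
    proof
      fix \<rho> assume r: "\<rho> \<in> W"
      then obtain e where e: "e > 0" "\<forall>\<rho>'\<in>SP. (\<forall>u\<in>V. dist (\<rho>' u) (\<rho> u) < e) \<longrightarrow> \<rho>' \<in> W"
        using key by blast
      obtain k :: nat where k: "1 / real (Suc k) < e / 2" using reals_Archimedean[of "e/2"] e(1)
        by (metis half_gt_zero inverse_eq_divide)
      have "\<forall>u. \<exists>q\<in>D. dist q (\<rho> u) < 1 / Suc k" using D(2) by simp
      then obtain q0 where q0: "\<And>u. q0 u \<in> D \<and> dist (q0 u) (\<rho> u) < 1 / Suc k" by metis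
      define q where "q = restrict q0 V"
      have qD: "q \<in> PiE V (\<lambda>_. D)" unfolding q_def using q0 by auto
      have rSP: "\<rho> \<in> SP" using r W_def by auto
      have "B (q,k) \<subseteq> W"
      proof
        fix \<rho>' assume "\<rho>' \<in> B (q,k)"
        then have r': "\<rho>' \<in> SP" "\<forall>u\<in>V. dist (q u) (\<rho>' u) < 1 / Suc k"
          unfolding B_def SP by (auto simp: PiE_iff)
        have "\<forall>u\<in>V. dist (\<rho>' u) (\<rho> u) < e"
        proof
          fix u assume u: "u \<in> V"
          have "dist (\<rho>' u) (\<rho> u) \<le> dist (q u) (\<rho>' u) + dist (q u) (\<rho> u)"
            by (rule dist_triangle3)
          also have "\<dots> < 1 / Suc k + 1 / Suc k" using r'(2) u q0[of u] unfolding q_def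
            by (intro add_strict_mono) auto
          finally show "dist (\<rho>' u) (\<rho> u) < e" using k by linarith
        qed
        then show "\<rho>' \<in> W" using e(2) r' by blast
      qed
      moreover have "\<rho> \<in> B (q,k)" using rSP q0 unfolding B_def SP q_def by (auto simp: PiE_iff dist_commute)
      ultimately show "\<rho> \<in> (\<Union>x\<in>I. B x)" unfolding I_def using qD by blast
    qed
  qed
  moreover have "(\<Union>x\<in>I. B x) \<in> sets (PiM V (\<lambda>_. (borel :: 'x measure)))"
  proof (rule sets.countable_UN'')
    have "I \<subseteq> PiE V (\<lambda>_. D) \<times> UNIV" unfolding I_def by auto
    moreover have "countable (PiE V (\<lambda>_. D) \<times> (UNIV :: nat set))"
      using countable_PiE[OF V, of "\<lambda>_. D"] D(1) by (simp add: countable_SIGMA)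
    ultimately show "countable I" by (rule countable_subset)
    fix x assume "x \<in> I"
    show "B x \<in> sets (PiM V (\<lambda>_. (borel :: 'x measure)))"
      unfolding B_def by (cases x) (auto intro!: sets_PiM_I_finite V)
  qed
  ultimately show "(\<lambda>\<rho>. \<lambda>g. \<rho> (s g)) -` U \<inter> space (PiM V (\<lambda>_. (borel :: 'x measure))) \<in> sets (PiM V (\<lambda>_. (borel :: 'x measure)))"
    unfolding W_def F_def SP_def by simp
qed

lemma compact_fun_UNIV:
  assumes X: "compact (UNIV :: 'x::topological_space set)"
  shows "compact (UNIV :: ('g \<Rightarrow> 'x) set)"
proof -
  have "compact_space (euclidean :: 'x topology)" using X by (simp add: compact_space_def)
  then have "compact_space (product_topology (\<lambda>_::'g. (euclidean::'x topology)) UNIV)"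
    by (simp add: compact_space_product_topology)
  then show ?thesis by (simp add: euclidean_product_topology compact_space_def)
qed

lemma shift_continuous: "continuous_on UNIV (shift G h :: ('g \<Rightarrow> 'x::topological_space) \<Rightarrow> _)"
  unfolding shift_def by (intro continuous_on_coordinatewise_then_product continuous_on_product_coordinates)
lemma shift_measurable: "shift G h \<in> borel_measurable (borel :: ('g \<Rightarrow> 'x::topological_space) measure)"
  by (rule borel_measurable_continuous_onI[OF shift_continuous])

lemma eval_measurable: "(\<lambda>\<omega>. \<omega> g) \<in> borel_measurable (borel :: ('g \<Rightarrow> 'x::topological_space) measure)"
  by (rule borel_measurable_continuous_onI[OF continuous_on_product_coordinates])

lemma null_closed:
  fixes \<mu> :: "('g \<Rightarrow> 'x::metric_space) measure"
  assumes s\<mu>: "sets \<mu> = sets borel" and X: "compact (UNIV :: 'x set)"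
    and C: "closed C" and CS: "C \<inter> measure_support \<mu> = {}"
  shows "emeasure \<mu> C = 0"
proof -
  have "compact C" using compact_Int_closed[OF compact_fun_UNIV[OF X] C] by simp
  have "\<forall>x\<in>C. \<exists>U. open U \<and> x \<in> U \<and> emeasure \<mu> U = 0"
  proof
    fix x assume "x \<in> C"
    then have "x \<notin> measure_support \<mu>" using CS by blast
    then obtain U where "open U" "x \<in> U" "\<not> emeasure \<mu> U > 0" unfolding measure_support_def by blast
    then show "\<exists>U. open U \<and> x \<in> U \<and> emeasure \<mu> U = 0" by (auto simp: not_less)
  qed
  then obtain Uf where Uf: "\<And>x. x \<in> C \<Longrightarrow> open (Uf x) \<and> x \<in> Uf x \<and> emeasure \<mu> (Uf x) = 0"
    by metis
  obtain C' where C': "C' \<subseteq> C" "finite C'" "C \<subseteq> (\<Union>c\<in>C'. Uf c)"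
    using compactE_image[OF \<open>compact C\<close>, of C Uf] Uf by blast
  have Us: "Uf ` C' \<subseteq> sets \<mu>" using Uf C'(1) s\<mu> by auto
  have "C \<in> sets \<mu>" using C s\<mu> by auto
  then have "emeasure \<mu> C \<le> emeasure \<mu> (\<Union>c\<in>C'. Uf c)"
    using Us C' by (intro emeasure_mono) auto
  also have "\<dots> \<le> (\<Sum>c\<in>C'. emeasure \<mu> (Uf c))"
    using emeasure_subadditive_finite[OF C'(2) Us] .
  also have "\<dots> = 0" using Uf C'(1) by (intro sum.neutral) auto
  finally show ?thesis by simp
qed

lemma (in group) shift_shift:
  assumes "carrier G = UNIV"
  shows "shift G a (shift G b \<omega>) = shift G (a \<otimes> b) \<omega>"
  unfolding shift_def using assms by (simp add: m_assoc)

lemma (in group) shift_one: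
  assumes "carrier G = UNIV"
  shows "shift G \<one> \<omega> = \<omega>"
  unfolding shift_def using assms by simp

lemma meas_borel_cong:
  assumes "sets M = sets (borel :: 'a::topological_space measure)" "f \<in> measurable borel N"
  shows "f \<in> measurable M N"
  unfolding measurable_cong_sets[OF assms(1) refl] by (rule assms(2))

lemma support_shift:
  fixes \<mu> :: "('g \<Rightarrow> 'x::topological_space) measure"
  assumes inv: "invariant_prob G \<mu>" and h: "h \<in> carrier G" and s: "s \<in> measure_support \<mu>"
  shows "shift G h s \<in> measure_support \<mu>"
  unfolding measure_support_def
proof (intro CollectI allI impI)
  fix U assume U: "open U" "shift G h s \<in> U"
  have s\<mu>: "sets \<mu> = sets borel" and d: "distr \<mu> borel (shift G h) = \<mu>"
    using inv h unfolding invariant_prob_def by auto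
  have sp: "space \<mu> = UNIV" using sets_eq_imp_space_eq[OF s\<mu>] by simp
  have m: "shift G h \<in> measurable \<mu> borel"
    by (rule meas_borel_cong[OF s\<mu> shift_measurable])
  have "emeasure \<mu> U = emeasure (distr \<mu> borel (shift G h)) U" using d by simp
  also have "\<dots> = emeasure \<mu> (shift G h -` U)"
    using U(1) m sp by (subst emeasure_distr) auto
  also have "\<dots> > 0"
  proof -
    have "\<forall>B. open B \<longrightarrow> open (shift G h -` B \<inter> UNIV)"
      using iffD1[OF continuous_on_open_vimage[OF open_UNIV] shift_continuous] by simp
    then have "open (shift G h -` U)" using U(1) by (metis Int_UNIV_right)
    moreover have "s \<in> shift G h -` U" using U(2) by simp
    ultimately show ?thesis using s unfolding measure_support_def by blast
  qed
  finally show "emeasure \<mu> U > 0" .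
qed

lemma core_push:
  fixes \<mu> :: "('g \<Rightarrow> 'x::metric_space) measure" and V :: "'v set"
    and \<sigma> :: "nat \<Rightarrow> 'g \<Rightarrow> 'v \<Rightarrow> 'v" and r :: "'v \<Rightarrow> 'g"
  assumes inv: "invariant_prob G \<mu>" and carr: "carrier G = UNIV"
    and X: "compact (UNIV :: 'x set)"
    and AE: "AE \<omega> in \<mu>. \<forall>g h. h \<in> N \<longrightarrow> \<omega> (g \<otimes>\<^bsub>G\<^esub> h) = \<omega> g"
    and V: "finite V" and s: "\<And>g. \<sigma> n g v \<in> V"
    and r: "\<And>g. \<exists>\<gamma>\<in>N. r (\<sigma> n g v) = g \<otimes>\<^bsub>G\<^esub> r v \<otimes>\<^bsub>G\<^esub> \<gamma>"
  shows "distr (distr \<mu> (PiM V (\<lambda>_. borel)) (\<lambda>\<omega>. \<lambda>u\<in>V. \<omega> (r u))) borel (Pi_v \<sigma> n v) = \<mu>"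
proof -
  have s\<mu>: "sets \<mu> = sets borel" and d: "distr \<mu> borel (shift G (r v)) = \<mu>"
    using inv carr unfolding invariant_prob_def by auto
  define T where "T = (\<lambda>\<omega>::'g\<Rightarrow>'x. \<lambda>u\<in>V. \<omega> (r u))"
  have Tm: "T \<in> measurable \<mu> (PiM V (\<lambda>_. borel))"
    unfolding T_def measurable_cong_sets[OF s\<mu> refl]
    by (rule measurable_restrict) (rule eval_measurable)
  have Pm: "Pi_v \<sigma> n v \<in> measurable (PiM V (\<lambda>_. (borel :: 'x measure))) (borel :: ('g \<Rightarrow> 'x) measure)"
    unfolding Pi_v_def by (rule Pi_measurable[OF V s X])
  have "distr (distr \<mu> (PiM V (\<lambda>_. borel)) T) borel (Pi_v \<sigma> n v) = distr \<mu> borel (Pi_v \<sigma> n v \<circ> T)"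
    by (rule distr_distr[OF Pm Tm])
  also have "\<dots> = distr \<mu> borel (shift G (r v))"
  proof (rule distr_cong_AE[OF refl refl])
    show "Pi_v \<sigma> n v \<circ> T \<in> measurable \<mu> borel" using Pm Tm by (rule measurable_comp[rotated])
    show "shift G (r v) \<in> measurable \<mu> borel" by (rule meas_borel_cong[OF s\<mu> shift_measurable])
    show "AE \<omega> in \<mu>. (Pi_v \<sigma> n v \<circ> T) \<omega> = shift G (r v) \<omega>"
      using AE
    proof (rule AE_mp, intro AE_I2 impI)
      fix \<omega> :: "'g \<Rightarrow> 'x" assume h: "\<forall>g h. h \<in> N \<longrightarrow> \<omega> (g \<otimes>\<^bsub>G\<^esub> h) = \<omega> g"
      show "(Pi_v \<sigma> n v \<circ> T) \<omega> = shift G (r v) \<omega>"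
      proof
        fix g
        obtain \<gamma> where \<gamma>: "\<gamma> \<in> N" "r (\<sigma> n g v) = g \<otimes>\<^bsub>G\<^esub> r v \<otimes>\<^bsub>G\<^esub> \<gamma>" using r by blast
        have "(Pi_v \<sigma> n v \<circ> T) \<omega> g = \<omega> (r (\<sigma> n g v))"
          unfolding Pi_v_def T_def using s[of g] by simp
        also have "\<dots> = \<omega> (g \<otimes>\<^bsub>G\<^esub> r v)" using \<gamma> h by simp
        finally show "(Pi_v \<sigma> n v \<circ> T) \<omega> g = shift G (r v) \<omega> g" unfolding shift_def .
      qed
    qed
  qed
  also have "\<dots> = \<mu>" by (rule d)
  finally show ?thesis unfolding T_def .
qed

lemma AE_periodic:
  fixes \<mu> :: "('g \<Rightarrow> 'x::metric_space) measure"
  assumes s\<mu>: "sets \<mu> = sets borel" and X: "compact (UNIV :: 'x set)"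
    and Nfix: "\<And>h s. h \<in> N \<Longrightarrow> s \<in> measure_support \<mu> \<Longrightarrow> shift G h s = s"
    and cnt: "countable (UNIV :: 'g set)"
  shows "AE \<omega> in \<mu>. \<forall>g h. h \<in> N \<longrightarrow> \<omega> (g \<otimes>\<^bsub>G\<^esub> h) = \<omega> g"
proof -
  have one: "AE \<omega> in \<mu>. \<omega> (g \<otimes>\<^bsub>G\<^esub> h) = \<omega> g" if hN: "h \<in> N" for g h
  proof -
    have "AE \<omega> in \<mu>. \<forall>k::nat. dist (\<omega> (g \<otimes>\<^bsub>G\<^esub> h)) (\<omega> g) < 1 / real (Suc k)"
      unfolding AE_all_countable
    proof
      fix k :: nat
      define C where "C = {\<omega>::'g\<Rightarrow>'x. 1 / real (Suc k) \<le> dist (\<omega> (g \<otimes>\<^bsub>G\<^esub> h)) (\<omega> g)}"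
      have cC: "closed C" unfolding C_def
        by (intro closed_Collect_le continuous_on_const continuous_on_dist continuous_on_product_coordinates)
      have "C \<inter> measure_support \<mu> = {}"
      proof (rule ccontr)
        assume "C \<inter> measure_support \<mu> \<noteq> {}"
        then obtain s where s: "s \<in> C" "s \<in> measure_support \<mu>" by blast
        have "s (g \<otimes>\<^bsub>G\<^esub> h) = shift G h s g" unfolding shift_def by simp
        also have "\<dots> = s g" using Nfix[OF hN s(2)] by simp
        finally show False using s(1) unfolding C_def by simp
      qed
      then have "emeasure \<mu> C = 0" using null_closed[OF s\<mu> X cC] by blast
      moreover have "C \<in> sets \<mu>" using cC s\<mu> by simp
      ultimately have "C \<in> null_sets \<mu>" by (rule null_setsI)
      then show "AE \<omega> in \<mu>. dist (\<omega> (g \<otimes>\<^bsub>G\<^esub> h)) (\<omega> g) < 1 / real (Suc k)"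
        by (rule AE_I') (auto simp: C_def not_less)
    qed
    then show ?thesis
    proof (rule AE_mp, intro AE_I2 impI)
      fix \<omega> :: "'g \<Rightarrow> 'x"
      assume a: "\<forall>k::nat. dist (\<omega> (g \<otimes>\<^bsub>G\<^esub> h)) (\<omega> g) < 1 / real (Suc k)"
      show "\<omega> (g \<otimes>\<^bsub>G\<^esub> h) = \<omega> g"
      proof (rule ccontr)
        assume "\<omega> (g \<otimes>\<^bsub>G\<^esub> h) \<noteq> \<omega> g"
        then have "dist (\<omega> (g \<otimes>\<^bsub>G\<^esub> h)) (\<omega> g) > 0" by simp
        then obtain k where "inverse (real (Suc k)) < dist (\<omega> (g \<otimes>\<^bsub>G\<^esub> h)) (\<omega> g)"
          using reals_Archimedean by blast
        then show False using a[rule_format, of k] by (simp add: inverse_eq_divide)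
      qed
    qed
  qed
  have "AE \<omega> in \<mu>. \<forall>g\<in>UNIV. \<forall>h\<in>N. \<omega> (g \<otimes>\<^bsub>G\<^esub> h) = \<omega> g"
  proof (rule AE_ball_countable'[OF _ cnt])
    fix g :: 'g
    show "AE \<omega> in \<mu>. \<forall>h\<in>N. \<omega> (g \<otimes>\<^bsub>G\<^esub> h) = \<omega> g"
      by (rule AE_ball_countable'[OF one countable_subset[OF subset_UNIV cnt]])
  qed
  then show ?thesis by (rule AE_mp) (intro AE_I2, blast)
qed

context group begin

lemma prodl_append:
  assumes carr: "carrier G = UNIV"
  shows "foldr (\<otimes>) xs b = foldr (\<otimes>) xs \<one> \<otimes> b"
  by (induction xs) (simp_all add: carr m_assoc)

lemma generate_countable:
  assumes carr: "carrier G = UNIV" and T: "countable T"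
  shows "countable (generate G T)"
proof -
  have "x \<in> (\<lambda>l. foldr (\<otimes>) l \<one>) ` lists (T \<union> (\<lambda>x. inv x) ` T)" if "x \<in> generate G T" for x
    using that
  proof (induction rule: generate.induct)
    case one
    show ?case by (rule image_eqI[of _ _ "[]"]) auto
  next
    case (incl h)
    show ?case by (rule image_eqI[of _ _ "[h]"]) (use incl carr in auto)
  next
    case (inv h)
    show ?case by (rule image_eqI[of _ _ "[inv h]"]) (use inv carr in auto)
  next
    case (eng h1 h2)
    then obtain l1 l2 where l: "l1 \<in> lists (T \<union> (\<lambda>x. inv x) ` T)" "h1 = foldr (\<otimes>) l1 \<one>"
      "l2 \<in> lists (T \<union> (\<lambda>x. inv x) ` T)" "h2 = foldr (\<otimes>) l2 \<one>" by blast
    have e: "h1 \<otimes> h2 = foldr (\<otimes>) (l1 @ l2) \<one>"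
      using l prodl_append[OF carr, of l1 "foldr (\<otimes>) l2 \<one>"] by simp
    have m: "l1 @ l2 \<in> lists (T \<union> (\<lambda>x. inv x) ` T)" using l by simp
    show ?case by (rule image_eqI[where f="\<lambda>l. foldr (\<otimes>) l \<one>", OF e m])
  qed
  then have "generate G T \<subseteq> (\<lambda>l. foldr (\<otimes>) l \<one>) ` lists (T \<union> (\<lambda>x. inv x) ` T)" by blast
  moreover have "countable ((\<lambda>l. foldr (\<otimes>) l \<one>) ` lists (T \<union> (\<lambda>x. inv x) ` T))"
    using T by auto
  ultimately show ?thesis by (rule countable_subset)
qed

lemma fg_countable:
  assumes carr: "carrier G = UNIV" and fg: "finitely_generated G"
  shows "countable (UNIV :: 'a set)"
  using fg generate_countable[OF carr] countable_finite carr unfolding finitely_generated_def by metis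

lemma kernel_normal:
  assumes carr: "carrier G = UNIV" and SS: "\<And>h s. s \<in> S \<Longrightarrow> shift G h s \<in> S"
  shows "{h. \<forall>s\<in>S. shift G h s = s} \<lhd> G"
proof (rule normal_invI)
  show "subgroup {h. \<forall>s\<in>S. shift G h s = s} G"
  proof (rule subgroupI)
    show "{h. \<forall>s\<in>S. shift G h s = s} \<noteq> {}" using shift_one[OF carr] by auto
    fix a b assume a: "a \<in> {h. \<forall>s\<in>S. shift G h s = s}" and b: "b \<in> {h. \<forall>s\<in>S. shift G h s = s}"
    show "a \<otimes> b \<in> {h. \<forall>s\<in>S. shift G h s = s}"
      using a b by (simp add: shift_shift[OF carr, symmetric])
  next
    fix a assume a: "a \<in> {h. \<forall>s\<in>S. shift G h s = s}"
    have "shift G (inv a) s = s" if "s \<in> S" for s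
    proof -
      have "shift G (inv a) s = shift G (inv a) (shift G a s)" using a that by simp
      also have "\<dots> = s" by (simp add: shift_shift[OF carr] shift_one[OF carr] carr)
      finally show ?thesis .
    qed
    then show "inv a \<in> {h. \<forall>s\<in>S. shift G h s = s}" by simp
  qed (simp add: carr)
next
  fix x h assume h: "h \<in> {h. \<forall>s\<in>S. shift G h s = s}"
  have "shift G (x \<otimes> h \<otimes> inv x) s = s" if "s \<in> S" for s
  proof -
    have "shift G (x \<otimes> h \<otimes> inv x) s = shift G x (shift G h (shift G (inv x) s))"
      by (simp add: shift_shift[OF carr] m_assoc carr)
    also have "\<dots> = shift G x (shift G (inv x) s)" using h SS[OF that] by simp
    also have "\<dots> = s" by (simp add: shift_shift[OF carr] shift_one[OF carr] carr)
    finally show ?thesis .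
  qed
  then show "x \<otimes> h \<otimes> inv x \<in> {h. \<forall>s\<in>S. shift G h s = s}" by simp
qed

lemma kernel_finite_index:
  assumes carr: "carrier G = UNIV" and SS: "\<And>h s. s \<in> S \<Longrightarrow> shift G h s \<in> S"
    and fin: "finite S"
  shows "finite (lcosets {h. \<forall>s\<in>S. shift G h s = s})"
proof -
  define N where "N = {h. \<forall>s\<in>S. shift G h s = s}"
  define \<psi> where "\<psi> = (\<lambda>g. restrict (shift G g) S)"
  have co: "a <# N = {g. \<psi> g = \<psi> a}" for a
  proof
    show "a <# N \<subseteq> {g. \<psi> g = \<psi> a}"
    proof
      fix g assume "g \<in> a <# N"
      then obtain n where n: "n \<in> N" "g = a \<otimes> n" unfolding l_coset_def by blast
      have "shift G g s = shift G a s" if "s \<in> S" for s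
        using n that unfolding N_def by (simp add: shift_shift[OF carr, symmetric])
      then show "g \<in> {g. \<psi> g = \<psi> a}" unfolding \<psi>_def by auto
    qed
    show "{g. \<psi> g = \<psi> a} \<subseteq> a <# N"
    proof
      fix g assume g: "g \<in> {g. \<psi> g = \<psi> a}"
      have "shift G (inv a \<otimes> g) s = s" if "s \<in> S" for s
      proof -
        have "shift G g s = shift G a s" using g that unfolding \<psi>_def by (metis (mono_tags) mem_Collect_eq restrict_apply')
        then have "shift G (inv a \<otimes> g) s = shift G (inv a) (shift G a s)"
          by (simp add: shift_shift[OF carr, symmetric])
        also have "\<dots> = s" by (simp add: shift_shift[OF carr] shift_one[OF carr] carr)
        finally show ?thesis .
      qed
      then have "inv a \<otimes> g \<in> N" unfolding N_def by simp
      moreover have "g = a \<otimes> (inv a \<otimes> g)" by (simp add: carr m_assoc[symmetric])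
      ultimately show "g \<in> a <# N" unfolding l_coset_def by blast
    qed
  qed
  have "lcosets N \<subseteq> (\<lambda>f. {g. \<psi> g = f}) ` (S \<rightarrow>\<^sub>E S)"
  proof
    fix C assume "C \<in> lcosets N"
    then obtain a where a: "C = a <# N" unfolding LCOSETS_def by blast
    have "\<psi> a \<in> S \<rightarrow>\<^sub>E S" unfolding \<psi>_def using SS by auto
    then show "C \<in> (\<lambda>f. {g. \<psi> g = f}) ` (S \<rightarrow>\<^sub>E S)" using a co by blast
  qed
  moreover have "finite ((\<lambda>f. {g. \<psi> g = f}) ` (S \<rightarrow>\<^sub>E S))" using fin by (simp add: finite_PiE)
  ultimately show ?thesis unfolding N_def by (rule finite_subset)
qed

end

definition rep :: "'a set \<Rightarrow> 'a" where "rep C = (SOME a. a \<in> C)"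

context group begin

lemma cancel1: assumes carr: "carrier G = UNIV" shows "x \<otimes> (inv x \<otimes> y) = y"
  using carr by (simp add: m_assoc[symmetric])
lemma cancel2: assumes carr: "carrier G = UNIV" shows "inv x \<otimes> (x \<otimes> y) = y"
  using carr by (simp add: m_assoc[symmetric])

lemma lcos_assoc':
  assumes carr: "carrier G = UNIV"
  shows "g <# (h <# C) = (g \<otimes> h) <# C"
  unfolding l_coset_def using carr by (auto simp: m_assoc)

lemma lcos_in_lcosets:
  assumes carr: "carrier G = UNIV" and C: "C \<in> lcosets H"
  shows "g <# C \<in> lcosets H"
proof -
  obtain a where a: "C = a <# H" using C unfolding LCOSETS_def by blast
  show ?thesis using a lcos_assoc'[OF carr] carr unfolding LCOSETS_def by auto
qed

lemma rep_mem:
  assumes carr: "carrier G = UNIV" and H: "subgroup H G" and C: "C \<in> lcosets H"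
  shows "rep C \<in> C"
proof -
  obtain a where a: "C = a <# H" using C unfolding LCOSETS_def by blast
  have "a \<in> C" unfolding a l_coset_def using subgroup.one_closed[OF H] carr
    by (auto intro!: bexI[of _ \<one>])
  then show ?thesis unfolding rep_def by (rule someI)
qed

lemma same_coset:
  assumes carr: "carrier G = UNIV" and H: "subgroup H G" and C: "C \<in> lcosets H"
    and x: "x \<in> C" and y: "y \<in> C"
  shows "inv x \<otimes> y \<in> H"
proof -
  obtain a where a: "C = a <# H" using C unfolding LCOSETS_def by blast
  obtain h1 h2 where h: "h1 \<in> H" "x = a \<otimes> h1" "h2 \<in> H" "y = a \<otimes> h2"
    using x y unfolding a l_coset_def by blast
  have "inv x \<otimes> y = inv h1 \<otimes> h2" using h carr by (simp add: inv_mult_group m_assoc cancel2[OF carr])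
  also have "\<dots> \<in> H" using h H by (simp add: subgroup.m_closed subgroup.m_inv_closed)
  finally show ?thesis .
qed

lemma rep_lcos:
  assumes carr: "carrier G = UNIV" and H: "subgroup H G" and C: "C \<in> lcosets H"
  shows "\<exists>\<gamma>\<in>H. rep (g <# C) = g \<otimes> rep C \<otimes> \<gamma>"
proof -
  have "rep (g <# C) \<in> g <# C" by (rule rep_mem[OF carr H lcos_in_lcosets[OF carr C]])
  then obtain c where c: "c \<in> C" "rep (g <# C) = g \<otimes> c" unfolding l_coset_def by blast
  have rC: "rep C \<in> C" by (rule rep_mem[OF carr H C])
  have "inv (rep C) \<otimes> c \<in> H" by (rule same_coset[OF carr H C rC c(1)])
  moreover have "g \<otimes> rep C \<otimes> (inv (rep C) \<otimes> c) = g \<otimes> c" using carr by (simp add: m_assoc cancel1[OF carr])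
  ultimately show ?thesis using c(2) by metis
qed

lemma normal_lcos_mult:
  assumes carr: "carrier G = UNIV" and H: "H \<lhd> G"
  shows "(a <# H) <#> (b <# H) = (a \<otimes> b) <# H"
proof -
  have "(a <# H) <#> (b <# H) = (H #> a) <#> (H #> b)"
    using normal.coset_eq[OF H] carr by simp
  also have "\<dots> = H #> (a \<otimes> b)" using normal.rcos_sum[OF H] carr by simp
  also have "\<dots> = (a \<otimes> b) <# H" using normal.coset_eq[OF H] carr by simp
  finally show ?thesis .
qed

lemma normal_lcosets_mult:
  assumes carr: "carrier G = UNIV" and H: "H \<lhd> G" and v: "v \<in> lcosets H" and w: "w \<in> lcosets H"
  shows "v <#> w \<in> lcosets H"
  using v w normal_lcos_mult[OF carr H] carr unfolding LCOSETS_def by auto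

lemma rep_mult:
  assumes carr: "carrier G = UNIV" and H: "H \<lhd> G" and v: "v \<in> lcosets H" and w: "w \<in> lcosets H"
  shows "\<exists>\<gamma>\<in>H. rep (v <#> w) = rep v \<otimes> rep w \<otimes> \<gamma>"
proof -
  have sH: "subgroup H G" using H by (rule normal_imp_subgroup)
  have "rep (v <#> w) \<in> v <#> w" by (rule rep_mem[OF carr sH normal_lcosets_mult[OF carr H v w]])
  then obtain x y where xy: "x \<in> v" "y \<in> w" "rep (v <#> w) = x \<otimes> y" unfolding set_mult_def by blast
  define g1 where "g1 = inv (rep v) \<otimes> x"
  define g2 where "g2 = inv (rep w) \<otimes> y"
  have g1: "g1 \<in> H" unfolding g1_def by (rule same_coset[OF carr sH v rep_mem[OF carr sH v] xy(1)])
  have g2: "g2 \<in> H" unfolding g2_def by (rule same_coset[OF carr sH w rep_mem[OF carr sH w] xy(2)])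
  have g1': "inv (rep w) \<otimes> g1 \<otimes> rep w \<in> H"
    using normal_invE(2)[OF H, of "inv (rep w)" g1] g1 carr by simp
  have "x \<otimes> y = rep v \<otimes> rep w \<otimes> ((inv (rep w) \<otimes> g1 \<otimes> rep w) \<otimes> g2)"
    unfolding g1_def g2_def using carr by (simp add: m_assoc cancel1[OF carr])
  moreover have "(inv (rep w) \<otimes> g1 \<otimes> rep w) \<otimes> g2 \<in> H"
    using g1' g2 sH by (simp add: subgroup.m_closed)
  ultimately show ?thesis using xy(3) by metis
qed

lemma lcosets_normal_eq_rcosets:
  assumes carr: "carrier G = UNIV" and H: "H \<lhd> G"
  shows "lcosets H = rcosets H"
  unfolding LCOSETS_def RCOSETS_def using normal.coset_eq[OF H] carr by auto

lemma normal_Int: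
  assumes carr: "carrier G = UNIV" and H: "H \<lhd> G" and K: "K \<lhd> G"
  shows "H \<inter> K \<lhd> G"
proof (rule normal_invI)
  show "subgroup (H \<inter> K) G"
    by (rule subgroups_Inter_pair[OF normal_imp_subgroup[OF H] normal_imp_subgroup[OF K]])
  fix x h assume "x \<in> carrier G" "h \<in> H \<inter> K"
  then show "x \<otimes> h \<otimes> inv x \<in> H \<inter> K" using normal_invE(2)[OF H] normal_invE(2)[OF K] by auto
qed

lemma lcosets_Int_finite:
  assumes carr: "carrier G = UNIV" and H: "subgroup H G" and K: "subgroup K G"
    and fH: "finite (lcosets H)" and fK: "finite (lcosets K)"
  shows "finite (lcosets (H \<inter> K))"
proof -
  have eq: "a <# (H \<inter> K) = (a <# H) \<inter> (a <# K)" for a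
  proof
    show "a <# (H \<inter> K) \<subseteq> (a <# H) \<inter> (a <# K)" unfolding l_coset_def by auto
    show "(a <# H) \<inter> (a <# K) \<subseteq> a <# (H \<inter> K)"
    proof
      fix x assume "x \<in> (a <# H) \<inter> (a <# K)"
      then obtain h k where hk: "h \<in> H" "x = a \<otimes> h" "k \<in> K" "x = a \<otimes> k" unfolding l_coset_def by blast
      then have "h = k" using carr by simp
      then show "x \<in> a <# (H \<inter> K)" using hk unfolding l_coset_def by blast
    qed
  qed
  have "lcosets (H \<inter> K) \<subseteq> (\<lambda>(A, B). A \<inter> B) ` ((lcosets H) \<times> (lcosets K))"
    unfolding LCOSETS_def using eq by fastforce
  moreover have "finite ((\<lambda>(A, B). A \<inter> B) ` ((lcosets H) \<times> (lcosets K)))" using fH fK by simp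
  ultimately show ?thesis by (rule finite_subset)
qed

end

lemma periodic_setup:
  fixes G :: "('g, 'b) monoid_scheme" and \<mu> :: "('g \<Rightarrow> 'x::metric_space) measure"
  assumes grp: "group G" and carr: "carrier G = UNIV" and fg: "finitely_generated G"
    and X: "compact (UNIV :: 'x set)" and per: "periodic_measure G \<mu>"
  obtains N where "N \<lhd> G" "finite (lcosets\<^bsub>G\<^esub> N)"
    "AE \<omega> in \<mu>. \<forall>g h. h \<in> N \<longrightarrow> \<omega> (g \<otimes>\<^bsub>G\<^esub> h) = \<omega> g"
proof -
  interpret group G by (rule grp)
  define S where "S = measure_support \<mu>"
  have inv: "invariant_prob G \<mu>" and fS: "finite S" using per unfolding periodic_measure_def S_def by auto
  have s\<mu>: "sets \<mu> = sets borel" using inv unfolding invariant_prob_def by auto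
  have SS: "\<And>h s. s \<in> S \<Longrightarrow> shift G h s \<in> S"
    unfolding S_def using support_shift[OF inv] carr by blast
  define N where "N = {h. \<forall>s\<in>S. shift G h s = s}"
  show ?thesis
  proof (rule that[of N])
    show "N \<lhd> G" unfolding N_def by (rule kernel_normal[OF carr SS])
    show "finite (lcosets\<^bsub>G\<^esub> N)" unfolding N_def by (rule kernel_finite_index[OF carr SS fS])
    show "AE \<omega> in \<mu>. \<forall>g h. h \<in> N \<longrightarrow> \<omega> (g \<otimes>\<^bsub>G\<^esub> h) = \<omega> g"
      by (rule AE_periodic[OF s\<mu> X _ fg_countable[OF carr fg]]) (auto simp: N_def S_def)
  qed
qed

lemma exact_model:
  fixes G :: "('g, 'b) monoid_scheme" and \<mu> :: "('g \<Rightarrow> 'x::topological_space) measure"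
  assumes grp: "group G" and sa: "sofic_approx G V \<sigma>"
    and p\<mu>: "prob_space \<mu>" and s\<mu>: "sets \<mu> = sets borel"
    and ps: "\<And>n. prob_space (\<mu>s n) \<and> sets (\<mu>s n) = sets (PiM (V n) (\<lambda>_. borel))"
    and ex: "\<And>n v. v \<in> V n \<Longrightarrow> distr (\<mu>s n) borel (Pi_v \<sigma> n v) = \<mu>"
  shows "sofic_model G \<mu> V \<sigma> \<mu>s"
proof -
  interpret group G by (rule grp)
  have "(\<lambda>n. real (card {v\<in>V n. \<sigma> n \<one>\<^bsub>G\<^esub> (\<sigma> n \<one>\<^bsub>G\<^esub> v) = \<sigma> n (\<one>\<^bsub>G\<^esub> \<otimes>\<^bsub>G\<^esub> \<one>\<^bsub>G\<^esub>) v}) / real (card (V n))) \<longlonglongrightarrow> 1"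
    using sa one_closed unfolding sofic_approx_def by blast
  then have "eventually (\<lambda>n. 0 < real (card {v\<in>V n. \<sigma> n \<one>\<^bsub>G\<^esub> (\<sigma> n \<one>\<^bsub>G\<^esub> v) = \<sigma> n (\<one>\<^bsub>G\<^esub> \<otimes>\<^bsub>G\<^esub> \<one>\<^bsub>G\<^esub>) v}) / real (card (V n))) sequentially"
    by (rule order_tendstoD) simp
  then have ev: "eventually (\<lambda>n. card (V n) > 0) sequentially"
    by (rule eventually_mono) (auto intro: ccontr)
  have B: "(\<lambda>n. real (card {v\<in>V n. distr (\<mu>s n) borel (Pi_v \<sigma> n v) \<in> U}) / real (card (V n))) \<longlonglongrightarrow> 1"
    if U: "weak_star_nhd \<mu> U" for U
  proof -
    have "\<mu> \<in> U" using U p\<mu> s\<mu> unfolding weak_star_nhd_def by auto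
    then have "{v\<in>V n. distr (\<mu>s n) borel (Pi_v \<sigma> n v) \<in> U} = V n" for n using ex by auto
    then have "eventually (\<lambda>n. real (card {v\<in>V n. distr (\<mu>s n) borel (Pi_v \<sigma> n v) \<in> U}) / real (card (V n)) = 1) sequentially"
      by (intro eventually_mono[OF ev]) (simp add: ex)
    then show ?thesis by (rule tendsto_eventually)
  qed
  show ?thesis unfolding sofic_model_def using sa ps B by blast
qed

lemma T_measurable:
  fixes \<mu> :: "('g \<Rightarrow> 'x::topological_space) measure"
  assumes s\<mu>: "sets \<mu> = sets borel"
  shows "(\<lambda>\<omega>::'g\<Rightarrow>'x. \<lambda>u\<in>L. \<omega> (r u)) \<in> measurable \<mu> (PiM L (\<lambda>_. borel))"
  unfolding measurable_cong_sets[OF s\<mu> refl]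
  by (rule measurable_restrict) (rule eval_measurable)

lemma (in group) right_invariance:
  fixes \<mu> :: "('a \<Rightarrow> 'x::metric_space) measure"
  assumes carr: "carrier G = UNIV" and inv: "invariant_prob G \<mu>"
    and AE: "AE \<omega> in \<mu>. \<forall>g h. h \<in> N \<longrightarrow> \<omega> (g \<otimes>\<^bsub>G\<^esub> h) = \<omega> g"
    and H: "H \<lhd> G" and HN: "H \<subseteq> N" and w: "w \<in> lcosets\<^bsub>G\<^esub> H"
  shows "distr (distr \<mu> (PiM (lcosets\<^bsub>G\<^esub> H) (\<lambda>_. borel)) (\<lambda>\<omega>. \<lambda>u\<in>lcosets\<^bsub>G\<^esub> H. \<omega> (rep u)))
           (PiM (lcosets\<^bsub>G\<^esub> H) (\<lambda>_. borel)) (\<lambda>\<rho>. \<lambda>v\<in>lcosets\<^bsub>G\<^esub> H. \<rho> (v <#>\<^bsub>G\<^esub> w))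
       = distr \<mu> (PiM (lcosets\<^bsub>G\<^esub> H) (\<lambda>_. borel)) (\<lambda>\<omega>. \<lambda>u\<in>lcosets\<^bsub>G\<^esub> H. \<omega> (rep u))"
proof -
  define L where "L = lcosets H"
  define T where "T = (\<lambda>\<omega>::'a\<Rightarrow>'x. \<lambda>u\<in>L. \<omega> (rep u))"
  define R where "R = (\<lambda>\<rho>::'a set \<Rightarrow> 'x. \<lambda>v\<in>L. \<rho> (v <#> w))"
  have s\<mu>: "sets \<mu> = sets borel" and d: "distr \<mu> borel (shift G (rep w)) = \<mu>"
    using inv carr unfolding invariant_prob_def by auto
  have Tm: "T \<in> measurable \<mu> (PiM L (\<lambda>_. borel))" unfolding T_def by (rule T_measurable[OF s\<mu>])
  have Tb: "T \<in> measurable borel (PiM L (\<lambda>_. borel))" unfolding T_def by (rule T_measurable) simp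
  have Rm: "R \<in> measurable (PiM L (\<lambda>_. borel)) (PiM L (\<lambda>_. borel))"
    unfolding R_def
  proof (rule measurable_restrict)
    fix v assume "v \<in> L"
    then have "v <#> w \<in> L" using normal_lcosets_mult[OF carr H _ w] unfolding L_def by blast
    then show "(\<lambda>\<rho>. \<rho> (v <#> w)) \<in> measurable (PiM L (\<lambda>_. borel)) borel"
      by (rule measurable_component_singleton)
  qed
  have Sm: "shift G (rep w) \<in> measurable \<mu> borel" by (rule meas_borel_cong[OF s\<mu> shift_measurable])
  have sH: "subgroup H G" using H by (rule normal_imp_subgroup)
  have "distr (distr \<mu> (PiM L (\<lambda>_. borel)) T) (PiM L (\<lambda>_. borel)) R = distr \<mu> (PiM L (\<lambda>_. borel)) (R \<circ> T)"
    by (rule distr_distr[OF Rm Tm])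
  also have "\<dots> = distr \<mu> (PiM L (\<lambda>_. borel)) (T \<circ> shift G (rep w))"
  proof (rule distr_cong_AE[OF refl refl])
    show "R \<circ> T \<in> measurable \<mu> (PiM L (\<lambda>_. borel))" using Rm Tm by (rule measurable_comp[rotated])
    show "T \<circ> shift G (rep w) \<in> measurable \<mu> (PiM L (\<lambda>_. borel))" using Tb Sm by (rule measurable_comp[rotated])
    show "AE \<omega> in \<mu>. (R \<circ> T) \<omega> = (T \<circ> shift G (rep w)) \<omega>"
      using AE
    proof (rule AE_mp, intro AE_I2 impI)
      fix \<omega> :: "'a \<Rightarrow> 'x" assume h: "\<forall>g h. h \<in> N \<longrightarrow> \<omega> (g \<otimes> h) = \<omega> g"
      show "(R \<circ> T) \<omega> = (T \<circ> shift G (rep w)) \<omega>"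
      proof
        fix v
        show "(R \<circ> T) \<omega> v = (T \<circ> shift G (rep w)) \<omega> v"
        proof (cases "v \<in> L")
          case True
          have vw: "v <#> w \<in> L" using normal_lcosets_mult[OF carr H _ w] True unfolding L_def by blast
          obtain \<gamma> where \<gamma>: "\<gamma> \<in> H" "rep (v <#> w) = rep v \<otimes> rep w \<otimes> \<gamma>"
            using rep_mult[OF carr H _ w] True unfolding L_def by blast
          have "(R \<circ> T) \<omega> v = \<omega> (rep (v <#> w))" unfolding R_def T_def using True vw by simp
          also have "\<dots> = \<omega> (rep v \<otimes> rep w)" using \<gamma> h HN by auto
          also have "\<dots> = (T \<circ> shift G (rep w)) \<omega> v" unfolding T_def shift_def using True by simp
          finally show ?thesis .
        next
          case False
          then show ?thesis unfolding R_def T_def by simp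
        qed
      qed
    qed
  qed
  also have "\<dots> = distr (distr \<mu> borel (shift G (rep w))) (PiM L (\<lambda>_. borel)) T"
    by (rule distr_distr[OF Tb Sm, symmetric])
  also have "\<dots> = distr \<mu> (PiM L (\<lambda>_. borel)) T" using d by simp
  finally show ?thesis unfolding T_def R_def L_def .
qed

context group begin

lemma one_lcos: assumes carr: "carrier G = UNIV" shows "\<one> <# C = C"
  unfolding l_coset_def using carr by auto

lemma rf_chain_exists:
  assumes carr: "carrier G = UNIV" and N: "N \<lhd> G" and fN: "finite (lcosets N)"
    and rf: "residually_finite G" and cnt: "countable (UNIV :: 'a set)"
  obtains \<Gamma> where "rf_chain G \<Gamma>" "\<And>n. \<Gamma> n \<subseteq> N"
proof -
  have "\<exists>M. M \<lhd> G \<and> finite (lcosets M) \<and> (g \<noteq> \<one> \<longrightarrow> g \<notin> M)" for g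
  proof (cases "g = \<one>")
    case True then show ?thesis using N fN by blast
  next
    case False
    then obtain M where M: "M \<lhd> G" "finite (rcosets M)" "g \<notin> M"
      using rf carr unfolding residually_finite_def by blast
    then show ?thesis using lcosets_normal_eq_rcosets[OF carr M(1)] by auto
  qed
  then obtain M where M: "\<And>g. M g \<lhd> G" "\<And>g. finite (lcosets (M g))" "\<And>g. g \<noteq> \<one> \<Longrightarrow> g \<notin> M g"
    by metis
  define e where "e = from_nat_into (UNIV :: 'a set)"
  have e: "range e = UNIV" unfolding e_def using cnt by simp
  define \<Gamma> where "\<Gamma> n = N \<inter> (\<Inter>i\<in>{..n}. M (e i))" for n
  have \<Gamma>0: "\<Gamma> 0 = N \<inter> M (e 0)" unfolding \<Gamma>_def by simp
  have \<Gamma>S: "\<Gamma> (Suc n) = \<Gamma> n \<inter> M (e (Suc n))" for n unfolding \<Gamma>_def by (auto simp: atMost_Suc)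
  have nf: "\<Gamma> n \<lhd> G \<and> finite (lcosets (\<Gamma> n))" for n
  proof (induction n)
    case 0 then show ?case unfolding \<Gamma>0
      using normal_Int[OF carr N M(1)] lcosets_Int_finite[OF carr normal_imp_subgroup[OF N] normal_imp_subgroup[OF M(1)] fN M(2)]
      by blast
  next
    case (Suc n) then show ?case unfolding \<Gamma>S
      using normal_Int[OF carr _ M(1)] lcosets_Int_finite[OF carr normal_imp_subgroup[of "\<Gamma> n"] normal_imp_subgroup[OF M(1)] _ M(2)]
      by blast
  qed
  show ?thesis
  proof (rule that[of \<Gamma>])
    show "\<Gamma> n \<subseteq> N" for n unfolding \<Gamma>_def by auto
    have "(\<Inter>n. \<Gamma> n) = {\<one>}"
    proof
      show "{\<one>} \<subseteq> (\<Inter>n. \<Gamma> n)" using nf by (auto intro: subgroup.one_closed normal_imp_subgroup)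
      show "(\<Inter>n. \<Gamma> n) \<subseteq> {\<one>}"
      proof
        fix x assume x: "x \<in> (\<Inter>n. \<Gamma> n)"
        obtain i where i: "x = e i" using e by (metis UNIV_I imageE)
        have "x \<in> M (e i)" using x unfolding \<Gamma>_def i by blast
        then show "x \<in> {\<one>}" using M(3)[of x] i by auto
      qed
    qed
    moreover have "\<Gamma> (Suc n) \<subseteq> \<Gamma> n" for n unfolding \<Gamma>S by auto
    ultimately show "rf_chain G \<Gamma>" unfolding rf_chain_def using nf by blast
  qed
qed

lemma rf_chain_antimono:
  assumes "rf_chain G \<Gamma>" "m \<le> n" shows "\<Gamma> n \<subseteq> \<Gamma> m"
  using assms(2)
proof (induction n)
  case 0 then show ?case by simp
next
  case (Suc n)
  then show ?case using assms(1) unfolding rf_chain_def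
    by (metis le_Suc_eq order.refl order_trans)
qed

lemma rf_sofic_approx:
  assumes carr: "carrier G = UNIV" and ch: "rf_chain G \<Gamma>"
  shows "sofic_approx G (rf_V G \<Gamma>) (rf_\<sigma> G)"
proof -
  have nf: "\<Gamma> n \<lhd> G" "finite ((lcosets (\<Gamma> n)))" for n using ch unfolding rf_chain_def by auto
  have sg: "subgroup (\<Gamma> n) G" for n using nf(1) by (rule normal_imp_subgroup)
  have ne: "card ((lcosets (\<Gamma> n))) > 0" for n
  proof -
    have "\<one> <# \<Gamma> n \<in> (lcosets (\<Gamma> n))" unfolding LCOSETS_def by auto
    then show ?thesis using nf(2) card_gt_0_iff by blast
  qed
  have bij: "bij_betw (\<lambda>C. g <# C) ((lcosets (\<Gamma> n))) ((lcosets (\<Gamma> n)))" for g n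
  proof (rule bij_betw_byWitness[where f'="\<lambda>C. inv g <# C"])
    show "\<forall>a\<in>(lcosets (\<Gamma> n)). inv g <# (g <# a) = a" using carr by (simp add: lcos_assoc' one_lcos)
    show "\<forall>a\<in>(lcosets (\<Gamma> n)). g <# (inv g <# a) = a" using carr by (simp add: lcos_assoc' one_lcos)
    show "(\<lambda>C. g <# C) ` (lcosets (\<Gamma> n)) \<subseteq> (lcosets (\<Gamma> n))" using lcos_in_lcosets[OF carr] by blast
    show "(\<lambda>C. inv g <# C) ` (lcosets (\<Gamma> n)) \<subseteq> (lcosets (\<Gamma> n))" using lcos_in_lcosets[OF carr] by blast
  qed
  have c3: "(\<lambda>n. real (card {v\<in>(lcosets (\<Gamma> n)). g <# (h <# v) = (g \<otimes> h) <# v}) / real (card ((lcosets (\<Gamma> n))))) \<longlonglongrightarrow> 1" for g h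
  proof -
    have "{v\<in>(lcosets (\<Gamma> n)). g <# (h <# v) = (g \<otimes> h) <# v} = (lcosets (\<Gamma> n))" for n
      by (simp add: lcos_assoc'[OF carr])
    moreover have "card ((lcosets (\<Gamma> n))) \<noteq> 0" for n using ne[of n] by linarith
    ultimately have "real (card {v\<in>(lcosets (\<Gamma> n)). g <# (h <# v) = (g \<otimes> h) <# v}) / real (card ((lcosets (\<Gamma> n)))) = 1" for n
      by simp
    then show ?thesis by (simp only: tendsto_const)
  qed
  have c4: "(\<lambda>n. real (card {v\<in>(lcosets (\<Gamma> n)). g <# v \<noteq> v}) / real (card ((lcosets (\<Gamma> n))))) \<longlonglongrightarrow> 1"
    if g: "g \<noteq> \<one>" for g
  proof -
    have "g \<notin> (\<Inter>n. \<Gamma> n)" using ch g unfolding rf_chain_def by auto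
    then obtain m where m: "g \<notin> \<Gamma> m" by blast
    have "{v\<in>(lcosets (\<Gamma> n)). g <# v \<noteq> v} = (lcosets (\<Gamma> n))" if n: "m \<le> n" for n
    proof -
      have gn: "g \<notin> \<Gamma> n" using m rf_chain_antimono[OF ch n] by blast
      have "g <# C \<noteq> C" if C: "C \<in> (lcosets (\<Gamma> n))" for C
      proof
        assume eq: "g <# C = C"
        obtain a where a: "C = a <# \<Gamma> n" using C unfolding LCOSETS_def by blast
        have aC: "a \<in> C" unfolding a l_coset_def using sg[of n] carr
          by (auto intro!: bexI[of _ \<one>] subgroup.one_closed)
        have "g \<otimes> a \<in> C" using aC eq unfolding l_coset_def by blast
        then have "inv a \<otimes> (g \<otimes> a) \<in> \<Gamma> n" by (rule same_coset[OF carr sg C aC])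
        then have "a \<otimes> (inv a \<otimes> (g \<otimes> a)) \<otimes> inv a \<in> \<Gamma> n"
          using normal_invE(2)[OF nf(1)] carr by blast
        moreover have "a \<otimes> (inv a \<otimes> (g \<otimes> a)) \<otimes> inv a = g"
          using carr by (simp add: cancel1[OF carr] m_assoc)
        ultimately show False using gn by simp
      qed
      then show ?thesis by auto
    qed
    moreover have "card ((lcosets (\<Gamma> n))) \<noteq> 0" for n using ne[of n] by linarith
    ultimately have "real (card {v\<in>(lcosets (\<Gamma> n)). g <# v \<noteq> v}) / real (card ((lcosets (\<Gamma> n)))) = 1" if "m \<le> n" for n
      using that by simp
    then have "eventually (\<lambda>n. real (card {v\<in>(lcosets (\<Gamma> n)). g <# v \<noteq> v}) / real (card ((lcosets (\<Gamma> n)))) = 1) sequentially"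
      by (intro eventually_sequentiallyI[of m])
    then show ?thesis by (rule tendsto_eventually)
  qed
  show ?thesis unfolding sofic_approx_def rf_V_def rf_\<sigma>_def
    using nf(2) bij c3 c4 by blast
qed

end

lemma (in group) part_ii:
  fixes \<mu> :: "('a \<Rightarrow> 'x::metric_space) measure"
  assumes carr: "carrier G = UNIV" and X: "compact (UNIV :: 'x set)" and inv: "invariant_prob G \<mu>"
    and N: "N \<lhd> G" and fN: "finite (lcosets N)"
    and AE: "AE \<omega> in \<mu>. \<forall>g h. h \<in> N \<longrightarrow> \<omega> (g \<otimes> h) = \<omega> g"
    and rf: "residually_finite G" and cnt: "countable (UNIV :: 'a set)"
  shows "\<exists>\<Gamma> \<mu>s. rf_model G \<mu> \<Gamma> \<mu>s \<and>
           (\<forall>n. \<forall>v\<in>rf_V G \<Gamma> n. distr (\<mu>s n) borel (Pi_v (rf_\<sigma> G) n v) = \<mu>)"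
proof -
  obtain \<Gamma> where ch: "rf_chain G \<Gamma>" and \<Gamma>N: "\<And>n. \<Gamma> n \<subseteq> N"
    using rf_chain_exists[OF carr N fN rf cnt] by blast
  have nf: "\<Gamma> n \<lhd> G" "finite (lcosets (\<Gamma> n))" for n using ch unfolding rf_chain_def by auto
  have sg: "subgroup (\<Gamma> n) G" for n using nf(1) by (rule normal_imp_subgroup)
  have p\<mu>: "prob_space \<mu>" and s\<mu>: "sets \<mu> = sets borel" using inv unfolding invariant_prob_def by auto
  define \<mu>s where "\<mu>s n = distr \<mu> (PiM (rf_V G \<Gamma> n) (\<lambda>_. borel)) (\<lambda>\<omega>. \<lambda>u\<in>rf_V G \<Gamma> n. \<omega> (rep u))" for n
  have ex: "distr (\<mu>s n) borel (Pi_v (rf_\<sigma> G) n v) = \<mu>" if v: "v \<in> rf_V G \<Gamma> n" for n v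
    unfolding \<mu>s_def
  proof (rule core_push[OF inv carr X AE])
    show "finite (rf_V G \<Gamma> n)" unfolding rf_V_def by (rule nf(2))
    show "rf_\<sigma> G n g v \<in> rf_V G \<Gamma> n" for g
      using v unfolding rf_V_def rf_\<sigma>_def by (rule lcos_in_lcosets[OF carr])
    show "\<exists>\<gamma>\<in>N. rep (rf_\<sigma> G n g v) = g \<otimes> rep v \<otimes> \<gamma>" for g
      using rep_lcos[OF carr sg, of v n g] v \<Gamma>N[of n] unfolding rf_V_def rf_\<sigma>_def by blast
  qed
  have ps: "prob_space (\<mu>s n) \<and> sets (\<mu>s n) = sets (PiM (rf_V G \<Gamma> n) (\<lambda>_. borel))" for n
    unfolding \<mu>s_def using prob_space.prob_space_distr[OF p\<mu> T_measurable[OF s\<mu>]] by simp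
  have sm: "sofic_model G \<mu> (rf_V G \<Gamma>) (rf_\<sigma> G) \<mu>s"
    by (rule exact_model[OF is_group rf_sofic_approx[OF carr ch] p\<mu> s\<mu> ps ex])
  have ri: "distr (\<mu>s n) (PiM (rf_V G \<Gamma> n) (\<lambda>_. borel)) (\<lambda>\<rho>. \<lambda>v\<in>rf_V G \<Gamma> n. \<rho> (v <#> w)) = \<mu>s n"
    if w: "w \<in> rf_V G \<Gamma> n" for n w
    unfolding \<mu>s_def rf_V_def
    by (rule right_invariance[OF carr inv AE nf(1) \<Gamma>N]) (use w in \<open>simp add: rf_V_def\<close>)
  show ?thesis unfolding rf_model_def using ch sm ri ex by blast
qed

lemma (in group) lcos_bij:
  assumes carr: "carrier G = UNIV"
  shows "bij_betw (\<lambda>C. g <# C) (lcosets H) (lcosets H)"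
proof (rule bij_betw_byWitness[where f'="\<lambda>C. inv g <# C"])
  show "\<forall>a\<in>lcosets H. inv g <# (g <# a) = a" using carr by (simp add: lcos_assoc' one_lcos)
  show "\<forall>a\<in>lcosets H. g <# (inv g <# a) = a" using carr by (simp add: lcos_assoc' one_lcos)
  show "(\<lambda>C. g <# C) ` (lcosets H) \<subseteq> (lcosets H)" using lcos_in_lcosets[OF carr] by blast
  show "(\<lambda>C. inv g <# C) ` (lcosets H) \<subseteq> (lcosets H)" using lcos_in_lcosets[OF carr] by blast
qed

lemma ratio_mult:
  assumes "k > 0"
  shows "real (a * k) / real (b * k) = real a / real b"
  using assms by simp

lemma (in group) part_i:
  fixes \<mu> :: "('a \<Rightarrow> 'x::metric_space) measure" and V0 :: "nat \<Rightarrow> nat set"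
  assumes carr: "carrier G = UNIV" and X: "compact (UNIV :: 'x set)" and inv: "invariant_prob G \<mu>"
    and N: "N \<lhd> G" and fN: "finite (lcosets N)"
    and AE: "AE \<omega> in \<mu>. \<forall>g h. h \<in> N \<longrightarrow> \<omega> (g \<otimes> h) = \<omega> g"
    and sa0: "sofic_approx G V0 \<sigma>0"
  shows "\<exists>(V :: nat \<Rightarrow> nat set) \<sigma> \<mu>s. sofic_model G \<mu> V \<sigma> \<mu>s \<and>
            (\<forall>n. \<forall>v\<in>V n. distr (\<mu>s n) borel (Pi_v \<sigma> n v) = \<mu>)"
proof -
  have sgN: "subgroup N G" using N by (rule normal_imp_subgroup)
  have p\<mu>: "prob_space \<mu>" and s\<mu>: "sets \<mu> = sets borel" using inv unfolding invariant_prob_def by auto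
  define L where "L = lcosets N"
  define k where "k = card L"
  define K where "K = {0..<k}"
  obtain e where e: "bij_betw e K L" unfolding K_def k_def using ex_bij_betw_nat_finite[OF fN[folded L_def]] by blast
  have kpos: "k > 0"
  proof -
    have "\<one> <# N \<in> L" unfolding L_def LCOSETS_def by auto
    then show ?thesis unfolding k_def using fN[folded L_def] card_gt_0_iff by blast
  qed
  define idx where "idx = inv_into K e"
  define act where "act g i = idx (g <# e i)" for g i
  have eK: "e i \<in> L" if "i \<in> K" for i using e that by (rule bij_betw_apply)
  have e_idx: "e (idx C) = C" if "C \<in> L" for C
    unfolding idx_def using e that by (simp add: bij_betw_inv_into_right)
  have idxK: "idx C \<in> K" if "C \<in> L" for C
    unfolding idx_def using bij_betw_inv_into[OF e] that by (rule bij_betw_apply)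
  have gL: "g <# C \<in> L" if "C \<in> L" for g C using that unfolding L_def by (rule lcos_in_lcosets[OF carr])
  have actK: "act g i \<in> K" if "i \<in> K" for g i unfolding act_def using idxK gL eK that by blast
  have e_act: "e (act g i) = g <# e i" if "i \<in> K" for g i unfolding act_def using e_idx gL eK that by blast
  have act_act: "act g (act h i) = act (g \<otimes> h) i" if "i \<in> K" for g h i
    unfolding act_def[of g] using e_act[OF that] by (simp add: act_def lcos_assoc'[OF carr])
  have act_bij: "bij_betw (act g) K K" for g
  proof -
    have "bij_betw (idx \<circ> ((\<lambda>C. g <# C) \<circ> e)) K K"
      unfolding idx_def
      by (rule bij_betw_trans[OF bij_betw_trans[OF e lcos_bij[OF carr, of g N, folded L_def]] bij_betw_inv_into[OF e]])
    moreover have "idx \<circ> ((\<lambda>C. g <# C) \<circ> e) = act g" unfolding act_def by auto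
    ultimately show ?thesis by simp
  qed
  define V where "V n = prod_encode ` (V0 n \<times> K)" for n
  define \<sigma> where "\<sigma> n g m = prod_encode (map_prod (\<sigma>0 n g) (act g) (prod_decode m))" for n g m
  define r where "r m = rep (e (snd (prod_decode m)))" for m
  have fin0: "finite (V0 n)" for n using sa0 unfolding sofic_approx_def by auto
  have bij0: "bij_betw (\<sigma>0 n g) (V0 n) (V0 n)" for n g using sa0 carr unfolding sofic_approx_def by auto
  have finV: "finite (V n)" for n unfolding V_def K_def using fin0 by simp
  have cardV: "card (V n) = card (V0 n) * k" for n
    unfolding V_def by (simp add: card_image[OF inj_prod_encode] card_cartesian_product K_def)
  have bijV: "bij_betw (\<sigma> n g) (V n) (V n)" for n g
  proof -
    have b1: "bij_betw prod_encode (V0 n \<times> K) (V n)" unfolding V_def by (rule inj_on_imp_bij_betw[OF inj_prod_encode])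
    have b3: "bij_betw prod_decode (V n) (V0 n \<times> K)"
      unfolding V_def bij_betw_def by (simp add: inj_prod_decode image_image)
    have b2: "bij_betw (map_prod (\<sigma>0 n g) (act g)) (V0 n \<times> K) (V0 n \<times> K)"
      by (rule bij_betw_map_prod[OF bij0 act_bij])
    have "bij_betw (prod_encode \<circ> (map_prod (\<sigma>0 n g) (act g) \<circ> prod_decode)) (V n) (V n)"
      by (rule bij_betw_trans[OF bij_betw_trans[OF b3 b2] b1])
    moreover have "prod_encode \<circ> (map_prod (\<sigma>0 n g) (act g) \<circ> prod_decode) = \<sigma> n g"
      unfolding \<sigma>_def by auto
    ultimately show ?thesis by simp
  qed
  have \<sigma>_enc: "\<sigma> n g (prod_encode (v, i)) = prod_encode (\<sigma>0 n g v, act g i)" for n g v i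
    unfolding \<sigma>_def by simp
  have set_enc: "{m \<in> V n. P m} = prod_encode ` {p \<in> V0 n \<times> K. P (prod_encode p)}" for n P
    unfolding V_def by auto
  have c3: "(\<lambda>n. real (card {m\<in>V n. \<sigma> n g (\<sigma> n h m) = \<sigma> n (g \<otimes> h) m}) / real (card (V n))) \<longlonglongrightarrow> 1" for g h
  proof -
    have lim0: "(\<lambda>n. real (card {v\<in>V0 n. \<sigma>0 n g (\<sigma>0 n h v) = \<sigma>0 n (g \<otimes> h) v}) / real (card (V0 n))) \<longlonglongrightarrow> 1"
      using sa0 carr unfolding sofic_approx_def by auto
    have "{p \<in> V0 n \<times> K. \<sigma> n g (\<sigma> n h (prod_encode p)) = \<sigma> n (g \<otimes> h) (prod_encode p)}
        = {v\<in>V0 n. \<sigma>0 n g (\<sigma>0 n h v) = \<sigma>0 n (g \<otimes> h) v} \<times> K" for n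
      by (auto simp: \<sigma>_enc act_act actK)
    then have "card {m\<in>V n. \<sigma> n g (\<sigma> n h m) = \<sigma> n (g \<otimes> h) m}
        = card {v\<in>V0 n. \<sigma>0 n g (\<sigma>0 n h v) = \<sigma>0 n (g \<otimes> h) v} * k" for n
      unfolding set_enc by (simp add: card_image[OF inj_prod_encode] card_cartesian_product K_def)
    then have "real (card {m\<in>V n. \<sigma> n g (\<sigma> n h m) = \<sigma> n (g \<otimes> h) m}) / real (card (V n))
        = real (card {v\<in>V0 n. \<sigma>0 n g (\<sigma>0 n h v) = \<sigma>0 n (g \<otimes> h) v}) / real (card (V0 n))" for n
      unfolding cardV by (simp only: ratio_mult[OF kpos])
    then show ?thesis using lim0 by simp
  qed
  have c4: "(\<lambda>n. real (card {m\<in>V n. \<sigma> n g m \<noteq> m}) / real (card (V n))) \<longlonglongrightarrow> 1" if g: "g \<noteq> \<one>" for g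
  proof (rule tendsto_sandwich)
    show "(\<lambda>n. real (card {v\<in>V0 n. \<sigma>0 n g v \<noteq> v}) / real (card (V0 n))) \<longlonglongrightarrow> 1"
      using sa0 carr g unfolding sofic_approx_def by auto
    show "((\<lambda>n. 1) \<longlongrightarrow> (1::real)) sequentially" by simp
    show "eventually (\<lambda>n. real (card {v\<in>V0 n. \<sigma>0 n g v \<noteq> v}) / real (card (V0 n))
        \<le> real (card {m\<in>V n. \<sigma> n g m \<noteq> m}) / real (card (V n))) sequentially"
    proof (rule always_eventually, rule allI)
      fix n
      have "prod_encode ` ({v\<in>V0 n. \<sigma>0 n g v \<noteq> v} \<times> K) \<subseteq> {m\<in>V n. \<sigma> n g m \<noteq> m}"
        unfolding set_enc by (auto simp: \<sigma>_enc)
      then have "card (prod_encode ` ({v\<in>V0 n. \<sigma>0 n g v \<noteq> v} \<times> K)) \<le> card {m\<in>V n. \<sigma> n g m \<noteq> m}"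
        by (rule card_mono[rotated]) (use finV in auto)
      then have "card {v\<in>V0 n. \<sigma>0 n g v \<noteq> v} * k \<le> card {m\<in>V n. \<sigma> n g m \<noteq> m}"
        by (simp add: card_image[OF inj_prod_encode] card_cartesian_product K_def)
      then have "real (card {v\<in>V0 n. \<sigma>0 n g v \<noteq> v} * k) \<le> real (card {m\<in>V n. \<sigma> n g m \<noteq> m})"
        by (simp only: of_nat_le_iff)
      then have "real (card {v\<in>V0 n. \<sigma>0 n g v \<noteq> v} * k) / real (card (V n))
          \<le> real (card {m\<in>V n. \<sigma> n g m \<noteq> m}) / real (card (V n))"
        by (rule divide_right_mono) simp
      then show "real (card {v\<in>V0 n. \<sigma>0 n g v \<noteq> v}) / real (card (V0 n))
          \<le> real (card {m\<in>V n. \<sigma> n g m \<noteq> m}) / real (card (V n))"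
        unfolding cardV by (simp only: ratio_mult[OF kpos])
    qed
    show "eventually (\<lambda>n. real (card {m\<in>V n. \<sigma> n g m \<noteq> m}) / real (card (V n)) \<le> 1) sequentially"
    proof (rule always_eventually, rule allI)
      fix n
      have "card {m\<in>V n. \<sigma> n g m \<noteq> m} \<le> card (V n)" using finV by (intro card_mono) auto
      then show "real (card {m\<in>V n. \<sigma> n g m \<noteq> m}) / real (card (V n)) \<le> 1"
        by (cases "card (V n) = 0") (auto simp: divide_le_eq_1)
    qed
  qed
  have sa: "sofic_approx G V \<sigma>" unfolding sofic_approx_def using finV bijV c3 c4 by blast
  define \<mu>s where "\<mu>s n = distr \<mu> (PiM (V n) (\<lambda>_. borel)) (\<lambda>\<omega>. \<lambda>u\<in>V n. \<omega> (r u))" for n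
  have ex: "distr (\<mu>s n) borel (Pi_v \<sigma> n m) = \<mu>" if m: "m \<in> V n" for n m
    unfolding \<mu>s_def
  proof (rule core_push[OF inv carr X AE finV])
    obtain v i where vi: "v \<in> V0 n" "i \<in> K" "m = prod_encode (v, i)" using m unfolding V_def by blast
    show "\<sigma> n g m \<in> V n" for g
      unfolding vi \<sigma>_enc V_def using bij_betw_apply[OF bij0 vi(1)] vi actK by blast
    show "\<exists>\<gamma>\<in>N. r (\<sigma> n g m) = g \<otimes> r m \<otimes> \<gamma>" for g
    proof -
      have "r (\<sigma> n g m) = rep (g <# e i)" unfolding r_def vi \<sigma>_enc using e_act[OF vi(2)] by simp
      moreover have "r m = rep (e i)" unfolding r_def vi by simp
      ultimately show ?thesis using rep_lcos[OF carr sgN, of "e i" g] eK[OF vi(2)] unfolding L_def by simp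
    qed
  qed
  have ps: "prob_space (\<mu>s n) \<and> sets (\<mu>s n) = sets (PiM (V n) (\<lambda>_. borel))" for n
    unfolding \<mu>s_def using prob_space.prob_space_distr[OF p\<mu> T_measurable[OF s\<mu>]] by simp
  have "sofic_model G \<mu> V \<sigma> \<mu>s" by (rule exact_model[OF is_group sa p\<mu> s\<mu> ps ex])
  then show ?thesis using ex by blast
qed

theorem mainTheorem11:
  fixes G :: "('g, 'b) monoid_scheme"
    and \<mu> :: "('g \<Rightarrow> 'x::metric_space) measure"
  assumes "group G" and "carrier G = UNIV"
    and "finitely_generated G" and "sofic_group G"
    and "compact (UNIV :: 'x set)"
    and "periodic_measure G \<mu>"
  shows "(\<exists>(V :: nat \<Rightarrow> nat set) \<sigma> \<mu>s. sofic_model G \<mu> V \<sigma> \<mu>s \<and>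
            (\<forall>n. \<forall>v\<in>V n. distr (\<mu>s n) borel (Pi_v \<sigma> n v) = \<mu>))
       \<and> (residually_finite G \<longrightarrow>
            (\<exists>\<Gamma> \<mu>s. rf_model G \<mu> \<Gamma> \<mu>s \<and>
               (\<forall>n. \<forall>v\<in>rf_V G \<Gamma> n. distr (\<mu>s n) borel (Pi_v (rf_\<sigma> G) n v) = \<mu>)))"
  proof -
  interpret group G by (rule assms(1))
  have carr: "carrier G = UNIV" by (rule assms(2))
  obtain N where N: "N \<lhd> G" "finite (lcosets\<^bsub>G\<^esub> N)"
    "AE \<omega> in \<mu>. \<forall>g h. h \<in> N \<longrightarrow> \<omega> (g \<otimes>\<^bsub>G\<^esub> h) = \<omega> g"
    using periodic_setup[OF assms(1,2,3,5,6)] by blast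
  have inv: "invariant_prob G \<mu>" using assms(6) unfolding periodic_measure_def by blast
  obtain V0 :: "nat \<Rightarrow> nat set" and \<sigma>0 where sa0: "sofic_approx G V0 \<sigma>0"
    using assms(4) unfolding sofic_group_def by blast
  have cnt: "countable (UNIV :: 'g set)" by (rule fg_countable[OF carr assms(3)])
  show ?thesis
    using part_i[OF carr assms(5) inv N sa0] part_ii[OF carr assms(5) inv N _ cnt] by blast
qed

end
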